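(* Let $d\ge 2$ and $n\ge 2$ be integers. Let $R=\mathbb{Q}[a_{i,j}:1\le i,j\le n]$ be the polynomial ring in $n^2$ indeterminates, let $A$ be the $n\times n$ matrix with $A_{i,j}=a_{i,j}$, and let $f=(f_1,\dots,f_n)$ with $f_i=x_i-\big(\sum_{j=1}^n a_{i,j}x_j\big)^d\in R[x_1,\dots,x_n]$. Write \[ \mathrm{Jac}(f)=\det\Big(\frac{\partial f_i}{\partial x_j}\Big)_{1\le i,j\le n}=\sum_{\alpha} J_\alpha x^\alpha,\qquad J_\alpha\in R, \] over multi-degrees $\alpha\in\mathbb{Z}_{\ge0}^n$. For integers $1\le k\le n-1$ and $1\le l\le n$, let $\alpha(k,l)$ be the multi-degree with $\alpha_l=k(d-1)$ and $\alpha_i=0$ for $i\ne l$. Then \[ J_{\alpha(k,l)}=(-d)^k\sum_{1\le i_1<i_2<\cdots<i_k\le n}|A|_{(i_1,\ldots,i_k)}\prod_{r=1}^k a_{i_r,l}^{\,d-1}, \] where $|A|_{(i_1,\ldots,i_k)}$ denotes the principal minor of $A$ on rows and columns $i_1,\ldots,i_k$. *)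

theory Defs
  imports "HOL-Library.Poly_Mapping" "Jordan_Normal_Form.Determinant"
begin

text \<open>Multivariate polynomials: monomials are finitely supported exponent maps
 'v \<Rightarrow>0 nat, polynomials are finitely supported coefficient maps on monomials
 (multiplication is convolution, as provided by HOL-Library.Poly_Mapping).\<close>

type_synonym ('v, 'r) mpoly = "('v \<Rightarrow>\<^sub>0 nat) \<Rightarrow>\<^sub>0 'r"

text \<open>The base ring R = Q[a_(i,j)], variables indexed by pairs (i,j), 0-based.\<close>
type_synonym R = "(nat \<times> nat, rat) mpoly"

type_synonym RX = "(nat, R) mpoly"

definition mvar :: "'v \<Rightarrow> ('v, 'r::comm_semiring_1) mpoly" where
  "mvar v = Poly_Mapping.single (Poly_Mapping.single v 1) 1"

definition mconst :: "'r \<Rightarrow> ('v, 'r::comm_semiring_1) mpoly" where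
  "mconst c = Poly_Mapping.single 0 c"

definition mpderiv :: "'v \<Rightarrow> ('v, 'r::comm_semiring_1) mpoly \<Rightarrow> ('v, 'r) mpoly" where
  "mpderiv v p = (\<Sum>m\<in>Poly_Mapping.keys p.
      Poly_Mapping.single (m - Poly_Mapping.single v 1) (of_nat (Poly_Mapping.lookup m v) * Poly_Mapping.lookup p m))"

definition avar :: "nat \<Rightarrow> nat \<Rightarrow> R" where
  "avar i j = mvar (i, j)"

definition fcomp :: "nat \<Rightarrow> nat \<Rightarrow> nat \<Rightarrow> RX" where
  "fcomp n d i = mvar i - (\<Sum>j<n. mconst (avar i j) * mvar j) ^ d"

definition Jac :: "nat \<Rightarrow> nat \<Rightarrow> RX" where
  "Jac n d = det (mat n n (\<lambda>(i, j). mpderiv j (fcomp n d i)))"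

definition principal_minor :: "nat set \<Rightarrow> R" where
  "principal_minor S = (let xs = sorted_list_of_set S in
     det (mat (length xs) (length xs) (\<lambda>(r, s). avar (xs ! r) (xs ! s))))"

end

theory Submission
  imports Defs
begin


lemma keys_add_nat: "Poly_Mapping.keys (a + b :: 'v \<Rightarrow>\<^sub>0 nat) = Poly_Mapping.keys a \<union> Poly_Mapping.keys b"
  by (auto simp: in_keys_iff lookup_add)

lemma poly_sum_singles:
  "p = (\<Sum>m\<in>Poly_Mapping.keys p. Poly_Mapping.single m (Poly_Mapping.lookup p m))"
proof (rule poly_mapping_eqI)
  fix k
  show "Poly_Mapping.lookup p k = Poly_Mapping.lookup (\<Sum>m\<in>Poly_Mapping.keys p. Poly_Mapping.single m (Poly_Mapping.lookup p m)) k"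
    by (cases "k \<in> Poly_Mapping.keys p")
       (auto simp: lookup_sum lookup_single when_def in_keys_iff)
qed

lemma mpoly_induct:
  fixes p :: "'a \<Rightarrow>\<^sub>0 'b::comm_monoid_add"
  assumes "P 0" "\<And>a c. P (Poly_Mapping.single a c)" "\<And>p q. P p \<Longrightarrow> P q \<Longrightarrow> P (p + q)"
  shows "P p"
proof -
  have "P (\<Sum>m\<in>K. Poly_Mapping.single m (Poly_Mapping.lookup p m))" if "finite K" for K
    using that by (induction K rule: finite_induct) (auto simp: assms)
  then show ?thesis using poly_sum_singles[of p] by (metis finite_keys)
qed

definition ev :: "'v \<Rightarrow> 'v \<Rightarrow>\<^sub>0 nat" where "ev v = Poly_Mapping.single v 1"

lemma mpderiv_K:
  fixes p :: "('v, 'r::comm_semiring_1) mpoly"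
  assumes "finite K" "Poly_Mapping.keys p \<subseteq> K"
  shows "mpderiv v p = (\<Sum>m\<in>K. Poly_Mapping.single (m - ev v) (of_nat (Poly_Mapping.lookup m v) * Poly_Mapping.lookup p m))"
  unfolding mpderiv_def ev_def
  by (rule sum.mono_neutral_left) (use assms in \<open>auto simp: in_keys_iff\<close>)

lemma mpderiv_add:
  fixes p q :: "('v, 'r::comm_semiring_1) mpoly"
  shows "mpderiv v (p + q) = mpderiv v p + mpderiv v q"
proof -
  define K where "K = Poly_Mapping.keys p \<union> Poly_Mapping.keys q \<union> Poly_Mapping.keys (p + q)"
  have f: "finite K" by (simp add: K_def)
  show ?thesis
    by (subst (1 2 3) mpderiv_K[OF f]) (auto simp: K_def lookup_add distrib_left single_add sum.distrib)
qed

lemma mpderiv_zero[simp]: "mpderiv v 0 = 0"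
  by (simp add: mpderiv_def)

lemma mpderiv_single:
  fixes c :: "'r::comm_semiring_1"
  shows "mpderiv v (Poly_Mapping.single a c) = Poly_Mapping.single (a - ev v) (of_nat (Poly_Mapping.lookup a v) * c)"
  by (subst mpderiv_K[of "{a}"]) auto

lemma mpderiv_sum:
  fixes f :: "'b \<Rightarrow> ('v, 'r::comm_semiring_1) mpoly"
  shows "mpderiv v (sum f A) = (\<Sum>x\<in>A. mpderiv v (f x))"
  by (induction A rule: infinite_finite_induct) (auto simp: mpderiv_add)

lemma mpderiv_minus:
  fixes p q :: "('v, 'r::comm_ring_1) mpoly"
  shows "mpderiv v (p - q) = mpderiv v p - mpderiv v q"
  using mpderiv_add[of v "p - q" q] by (simp add: eq_diff_eq)

lemma mpderiv_mult_single:
  fixes c e :: "'r::comm_semiring_1"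
  shows "mpderiv v (Poly_Mapping.single a c * Poly_Mapping.single b e) =
    mpderiv v (Poly_Mapping.single a c) * Poly_Mapping.single b e + Poly_Mapping.single a c * mpderiv v (Poly_Mapping.single b e)"
proof -
  have 1: "Poly_Mapping.single (a + b - ev v) (of_nat (Poly_Mapping.lookup a v) * (c * e)) =
      Poly_Mapping.single (a - ev v + b) (of_nat (Poly_Mapping.lookup a v) * c * e)"
  proof (cases "Poly_Mapping.lookup a v = 0")
    case False
    have "a + b - ev v = a - ev v + b"
      by (rule poly_mapping_eqI) (use False in \<open>auto simp: lookup_add lookup_minus ev_def lookup_single when_def\<close>)
    then show ?thesis by (simp add: mult.assoc)
  qed simp
  have 2: "Poly_Mapping.single (a + b - ev v) (of_nat (Poly_Mapping.lookup b v) * (c * e)) =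
      Poly_Mapping.single (a + (b - ev v)) (c * (of_nat (Poly_Mapping.lookup b v) * e))"
  proof (cases "Poly_Mapping.lookup b v = 0")
    case False
    have "a + b - ev v = a + (b - ev v)"
      by (rule poly_mapping_eqI) (use False in \<open>auto simp: lookup_add lookup_minus ev_def lookup_single when_def\<close>)
    then show ?thesis by (simp add: algebra_simps)
  qed simp
  show ?thesis
    unfolding mult_single mpderiv_single
    by (simp add: lookup_add 1[symmetric] 2[symmetric] single_add[symmetric] distrib_right)
qed

lemma mpderiv_mult:
  fixes p q :: "('v, 'r::comm_semiring_1) mpoly"
  shows "mpderiv v (p * q) = mpderiv v p * q + p * mpderiv v q"
proof (induction p arbitrary: q rule: mpoly_induct)
  case (2 a c)
  show ?case
  proof (induction q rule: mpoly_induct)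
    case (2 b e)
    then show ?case by (rule mpderiv_mult_single)
  next
    case (3 p q)
    show ?case by (simp only: distrib_left mpderiv_add 3 distrib_right) (simp add: algebra_simps)
  qed simp
next
  case (3 p1 p2)
  show ?case by (simp only: distrib_right mpderiv_add 3 distrib_left) (simp add: algebra_simps)
qed simp

lemma mpderiv_power:
  fixes p :: "('v, 'r::comm_semiring_1) mpoly"
  shows "mpderiv v (p ^ Suc m) = of_nat (Suc m) * p ^ m * mpderiv v p"
proof (induction m)
  case 0
  then show ?case by simp
next
  case (Suc m)
  have "mpderiv v (p ^ Suc (Suc m)) = mpderiv v (p * p ^ Suc m)" by simp
  also have "\<dots> = mpderiv v p * p ^ Suc m + p * (of_nat (Suc m) * p ^ m * mpderiv v p)"
    by (simp only: mpderiv_mult Suc)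
  also have "\<dots> = of_nat (Suc (Suc m)) * p ^ Suc m * mpderiv v p"
    by (simp add: algebra_simps)
  finally show ?case .
qed

lemma mpderiv_mconst[simp]: "mpderiv v (mconst c) = 0"
  unfolding mconst_def mpderiv_single by simp

lemma mpderiv_mvar: "mpderiv v (mvar j :: ('v, 'r::comm_semiring_1) mpoly) = (if j = v then 1 else 0)"
  unfolding mvar_def mpderiv_single ev_def
  by (auto simp: lookup_single)

lemma mpderiv_mconst_mult: "mpderiv v (mconst c * p) = mconst c * mpderiv v p"
  by (simp add: mpderiv_mult)

interpretation mconst_hom: comm_ring_hom "mconst :: 'r::comm_ring_1 \<Rightarrow> ('v, 'r) mpoly"
  by unfold_locales (auto simp: mconst_def single_add mult_single)



definition rho :: "'v \<Rightarrow> ('v, 'r::comm_ring_1) mpoly \<Rightarrow> ('v, 'r) mpoly" where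
  "rho l P = Abs_poly_mapping (\<lambda>m. if Poly_Mapping.keys m \<subseteq> {l} then Poly_Mapping.lookup P m else 0)"

lemma lookup_rho:
  "Poly_Mapping.lookup (rho l P) m = (if Poly_Mapping.keys m \<subseteq> {l} then Poly_Mapping.lookup P m else 0)"
proof -
  have "finite {m. (if Poly_Mapping.keys m \<subseteq> {l} then Poly_Mapping.lookup P m else 0) \<noteq> 0}"
    by (rule finite_subset[OF _ finite_keys[of P]]) (auto simp: in_keys_iff)
  then show ?thesis unfolding rho_def by (simp add: Abs_poly_mapping_inverse)
qed

lemma rho_add: "rho l (P + Q) = rho l P + rho l Q"
  by (rule poly_mapping_eqI) (simp add: lookup_rho lookup_add)

lemma rho_zero[simp]: "rho l 0 = 0"
  by (rule poly_mapping_eqI) (simp add: lookup_rho)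

lemma rho_single: "rho l (Poly_Mapping.single m c) =
   (if Poly_Mapping.keys m \<subseteq> {l} then Poly_Mapping.single m c else 0)"
  by (rule poly_mapping_eqI) (auto simp: lookup_rho lookup_single when_def)

lemma rho_mult: "rho l (P * Q) = rho l P * rho l Q"
proof (induction P arbitrary: Q rule: mpoly_induct)
  case (2 a c)
  show ?case
  proof (induction Q rule: mpoly_induct)
    case (2 b e)
    then show ?case by (simp add: mult_single rho_single keys_add_nat)
  next
    case (3 p q)
    then show ?case by (simp add: distrib_left rho_add)
  qed simp
next
  case (3 p1 p2)
  then show ?case by (simp add: distrib_right rho_add)
qed simp

lemma rho_one: "rho l (1 :: ('v, 'r::comm_ring_1) mpoly) = 1"
  using rho_single[of l "0::'v \<Rightarrow>\<^sub>0 nat" "1::'r"] by simp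

interpretation rho_hom: comm_ring_hom "rho l :: ('v, 'r::comm_ring_1) mpoly \<Rightarrow> ('v, 'r) mpoly"
  by unfold_locales (auto simp: rho_add rho_mult rho_one)

lemma rho_mconst[simp]: "rho l (mconst c) = mconst c"
  by (simp add: mconst_def rho_single)

lemma rho_mvar: "rho l (mvar j :: ('v, 'r::comm_ring_1) mpoly) = (if j = l then mvar l else 0)"
  by (simp add: mvar_def rho_single)

lemma lookup_rho_same: "Poly_Mapping.lookup P (Poly_Mapping.single l N) = Poly_Mapping.lookup (rho l P) (Poly_Mapping.single l N)"
  by (simp add: lookup_rho)

lemma mvar_power: "mvar l ^ N = (Poly_Mapping.single (Poly_Mapping.single l N) 1 :: ('v, 'r::comm_semiring_1) mpoly)"
  by (induction N) (auto simp: mvar_def mult_single single_add[symmetric])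

lemma lookup_mconst_mvar_power:
  "Poly_Mapping.lookup (mconst c * mvar l ^ N :: ('v, 'r::comm_semiring_1) mpoly) (Poly_Mapping.single l M) = (if N = M then c else 0)"
proof -
  have "Poly_Mapping.single l N = Poly_Mapping.single l M \<longleftrightarrow> N = M"
    by (metis lookup_single_eq)
  then show ?thesis by (simp add: mvar_power mconst_def mult_single lookup_single when_def)
qed



lemma permutes_sub_iff:
  assumes "X \<subseteq> A"
  shows "(p permutes A \<and> (\<forall>i\<in>A - X. p i = i)) \<longleftrightarrow> p permutes X"
proof
  assume "p permutes X" then show "p permutes A \<and> (\<forall>i\<in>A - X. p i = i)"
    by (simp add: permutes_subset[OF _ assms] permutes_not_in)
next
  assume h: "p permutes A \<and> (\<forall>i\<in>A - X. p i = i)"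
  have "p x = x" if "x \<notin> X" for x
  proof (cases "x \<in> A")
    case True then show ?thesis using h that by blast
  next
    case False then show ?thesis using h permutes_not_in by metis
  qed
  moreover have "\<forall>y. \<exists>!x. p x = y" using h unfolding permutes_def by simp
  ultimately show "p permutes X" unfolding permutes_def by simp
qed

lemma prod_delta:
  "finite F \<Longrightarrow> (\<Prod>i\<in>F. (if i = p i then 1 else 0 :: 'a::comm_semiring_1)) = (if \<forall>i\<in>F. p i = i then 1 else 0)"
  by (induction F rule: finite_induct) auto

lemma det_I_plus:
  fixes u :: "nat \<Rightarrow> 'a::comm_ring_1" and B :: "nat \<Rightarrow> nat \<Rightarrow> 'a"
  shows "det (mat n n (\<lambda>(i,j). (if i = j then 1 else 0) + u i * B i j)) =
    (\<Sum>S\<in>Pow {0..<n}. (\<Prod>i\<in>S. u i) * (\<Sum>p\<in>{p. p permutes S}. signof p * (\<Prod>i\<in>S. B i (p i))))"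
proof -
  let ?A = "{0..<n}"
  let ?P = "{p. p permutes ?A}"
  have "det (mat n n (\<lambda>(i,j). (if i = j then 1 else 0) + u i * B i j)) =
     (\<Sum>p\<in>?P. signof p * (\<Prod>i\<in>?A. u i * B i (p i) + (if i = p i then 1 else 0)))"
  proof -
    have "det (mat n n (\<lambda>(i,j). (if i = j then 1 else 0) + u i * B i j)) =
      (\<Sum>p\<in>?P. signof p * (\<Prod>i\<in>?A. (mat n n (\<lambda>(i,j). (if i = j then 1 else 0) + u i * B i j)) $$ (i, p i)))"
      unfolding det_def by simp
    also have "\<dots> = (\<Sum>p\<in>?P. signof p * (\<Prod>i\<in>?A. u i * B i (p i) + (if i = p i then 1 else 0)))"
    proof (rule sum.cong[OF refl])
      fix p assume "p \<in> ?P"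
      then have pn: "i \<in> ?A \<Longrightarrow> p i < n" for i using permutes_in_image by fastforce
      have "(\<Prod>i\<in>?A. (mat n n (\<lambda>(i,j). (if i = j then 1 else 0) + u i * B i j)) $$ (i, p i)) =
            (\<Prod>i\<in>?A. u i * B i (p i) + (if i = p i then 1 else 0))"
        by (rule prod.cong[OF refl]) (simp add: pn add.commute)
      then show "signof p * (\<Prod>i\<in>?A. (mat n n (\<lambda>(i,j). (if i = j then 1 else 0) + u i * B i j)) $$ (i, p i)) =
            signof p * (\<Prod>i\<in>?A. u i * B i (p i) + (if i = p i then 1 else 0))" by simp
    qed
    finally show ?thesis .
  qed
  also have "\<dots> = (\<Sum>p\<in>?P. \<Sum>X\<in>Pow ?A. signof p * ((\<Prod>i\<in>X. u i * B i (p i)) * (if \<forall>i\<in>?A - X. p i = i then 1 else 0)))"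
    by (rule sum.cong[OF refl]) (simp add: prod_add sum_distrib_left prod_delta)
  also have "\<dots> = (\<Sum>X\<in>Pow ?A. \<Sum>p\<in>?P. signof p * ((\<Prod>i\<in>X. u i * B i (p i)) * (if \<forall>i\<in>?A - X. p i = i then 1 else 0)))"
    by (rule sum.swap)
  also have "\<dots> = (\<Sum>X\<in>Pow ?A. (\<Prod>i\<in>X. u i) * (\<Sum>p\<in>{p. p permutes X}. signof p * (\<Prod>i\<in>X. B i (p i))))"
  proof (rule sum.cong[OF refl])
    fix X assume X: "X \<in> Pow ?A"
    have "(\<Sum>p\<in>?P. signof p * ((\<Prod>i\<in>X. u i * B i (p i)) * (if \<forall>i\<in>?A - X. p i = i then 1 else 0))) =
        (\<Sum>p\<in>?P. if \<forall>i\<in>?A - X. p i = i then (\<Prod>i\<in>X. u i) * (signof p * (\<Prod>i\<in>X. B i (p i))) else 0)"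
      by (rule sum.cong[OF refl]) (simp add: prod.distrib)
    also have "\<dots> = (\<Sum>p\<in>{p\<in>?P. \<forall>i\<in>?A - X. p i = i}. (\<Prod>i\<in>X. u i) * (signof p * (\<Prod>i\<in>X. B i (p i))))"
      by (rule sum.inter_filter[symmetric]) (simp add: finite_permutations)
    also have "{p\<in>?P. \<forall>i\<in>?A - X. p i = i} = {p. p permutes X}"
    proof -
      have sub: "X \<subseteq> ?A" using X by simp
      show ?thesis using permutes_sub_iff[OF sub] by auto
    qed
    finally show "(\<Sum>p\<in>?P. signof p * ((\<Prod>i\<in>X. u i * B i (p i)) * (if \<forall>i\<in>?A - X. p i = i then 1 else 0))) =
        (\<Prod>i\<in>X. u i) * (\<Sum>p\<in>{p. p permutes X}. signof p * (\<Prod>i\<in>X. B i (p i)))"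
      by (simp add: sum_distrib_left)
  qed
  finally show ?thesis .
qed

lemma perm_sum_reindex:
  fixes M :: "'b \<Rightarrow> 'b \<Rightarrow> 'a::comm_ring_1"
  assumes bij: "bij_betw g A B" and fin: "finite A"
  shows "(\<Sum>\<pi>\<in>{\<pi>. \<pi> permutes A}. (of_int (sign \<pi>) :: 'a) * (\<Prod>r\<in>A. M (g r) (g (\<pi> r)))) =
         (\<Sum>p\<in>{p. p permutes B}. of_int (sign p) * (\<Prod>i\<in>B. M i (p i)))"
proof -
  let ?c = "\<lambda>\<pi> x. if x \<in> B then g (\<pi> (inv_into A g x)) else x"
  have "(\<Sum>p\<in>{p. p permutes B}. of_int (sign p) * (\<Prod>i\<in>B. M i (p i))) =
      (\<Sum>\<pi>\<in>{\<pi>. \<pi> permutes A}. of_int (sign (?c \<pi>)) * (\<Prod>i\<in>B. M i (?c \<pi> i)))"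
    by (rule sum.reindex_bij_betw[OF bij_betw_permutations[OF bij], symmetric])
  also have "\<dots> = (\<Sum>\<pi>\<in>{\<pi>. \<pi> permutes A}. (of_int (sign \<pi>) :: 'a) * (\<Prod>r\<in>A. M (g r) (g (\<pi> r))))"
  proof (rule sum.cong[OF refl])
    fix \<pi> assume "\<pi> \<in> {\<pi>. \<pi> permutes A}"
    then have pi: "\<pi> permutes A" by simp
    have inj: "inj_on g A" using bij bij_betw_def by blast
    interpret pb: permutes_bij_finite \<pi> A B g "inv_into A g" "?c \<pi>"
      by unfold_locales (use pi bij fin inj in \<open>auto simp: inv_into_f_f\<close>)
    have s: "sign (?c \<pi>) = sign \<pi>" by (rule pb.sign_p')
    have "(\<Prod>i\<in>B. M i (?c \<pi> i)) = (\<Prod>r\<in>A. M (g r) (?c \<pi> (g r)))"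
      by (rule prod.reindex_bij_betw[OF bij, symmetric])
    also have "\<dots> = (\<Prod>r\<in>A. M (g r) (g (\<pi> r)))"
      by (rule prod.cong[OF refl]) (use bij inj in \<open>auto simp: inv_into_f_f bij_betw_def\<close>)
    finally show "of_int (sign (?c \<pi>)) * (\<Prod>i\<in>B. M i (?c \<pi> i)) = (of_int (sign \<pi>) :: 'a) * (\<Prod>r\<in>A. M (g r) (g (\<pi> r)))"
      by (simp add: s)
  qed
  finally show ?thesis by simp
qed

lemma principal_minor_eq:
  assumes "finite S"
  shows "principal_minor S = (\<Sum>p\<in>{p. p permutes S}. of_int (sign p) * (\<Prod>i\<in>S. avar i (p i)))"
proof -
  define xs where "xs = sorted_list_of_set S"
  have bij: "bij_betw ((!) xs) {0..<length xs} S"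
    by (rule bij_betw_nth) (auto simp: xs_def assms)
  have "principal_minor S = det (mat (length xs) (length xs) (\<lambda>(r, s). avar (xs ! r) (xs ! s)))"
    unfolding principal_minor_def xs_def Let_def ..
  also have "\<dots> = (\<Sum>\<pi>\<in>{\<pi>. \<pi> permutes {0..<length xs}}. of_int (sign \<pi>) * (\<Prod>r\<in>{0..<length xs}. avar (xs ! r) (xs ! (\<pi> r))))"
    unfolding det_def
  proof (simp only: dim_row_mat dim_col_mat simp_thms if_True, rule sum.cong[OF refl])
    fix p assume "p \<in> {p. p permutes {0..<length xs}}"
    then have pn: "i \<in> {0..<length xs} \<Longrightarrow> p i < length xs" for i using permutes_in_image by fastforce
    show "signof p * (\<Prod>i = 0..<length xs. mat (length xs) (length xs) (\<lambda>(r, s). avar (xs ! r) (xs ! s)) $$ (i, p i)) =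
          signof p * (\<Prod>r = 0..<length xs. avar (xs ! r) (xs ! p r))"
      by (intro arg_cong[where f="\<lambda>x. signof p * x"] prod.cong refl) (simp add: pn)
  qed
  also have "\<dots> = (\<Sum>p\<in>{p. p permutes S}. of_int (sign p) * (\<Prod>i\<in>S. avar i (p i)))"
    by (rule perm_sum_reindex[OF bij]) simp
  finally show ?thesis .
qed



theorem mainTheorem2:
  fixes n d k l :: nat
  assumes "d \<ge> 2" and "n \<ge> 2"
    and "1 \<le> k" and "k \<le> n - 1"
    and "l < n"
  shows "Poly_Mapping.lookup (Jac n d) (Poly_Mapping.single l (k * (d - 1))) =
         (- of_nat d) ^ k *
         (\<Sum>S\<in>{S. S \<subseteq> {0..<n} \<and> card S = k}.
             principal_minor S * (\<Prod>r\<in>S. avar r l ^ (d - 1)))"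
proof -
  define L :: "nat \<Rightarrow> RX" where "L i = (\<Sum>j<n. mconst (avar i j) * mvar j)" for i
  define u :: "nat \<Rightarrow> RX" where "u i = - of_nat d * L i ^ (d - 1)" for i
  have d: "d = Suc (d - 1)" using assms(1) by simp
  have dL: "mpderiv j (L i) = mconst (avar i j)" if "j < n" for i j
  proof -
    have "mpderiv j (L i) = (\<Sum>j'<n. if j' = j then mconst (avar i j') else 0)"
      unfolding L_def mpderiv_sum mpderiv_mconst_mult mpderiv_mvar
      by (rule sum.cong) auto
    also have "\<dots> = mconst (avar i j)" using that by (simp add: sum.delta)
    finally show ?thesis .
  qed
  have entry: "mpderiv j (fcomp n d i) = (if i = j then 1 else 0) + u i * mconst (avar i j)"
    if "j < n" for i j
  proof -
    have "mpderiv j (fcomp n d i) = mpderiv j (mvar i) - mpderiv j (L i ^ Suc (d - 1))"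
      unfolding fcomp_def L_def[symmetric] mpderiv_minus using d by simp
    also have "\<dots> = (if i = j then 1 else 0) - of_nat d * L i ^ (d - 1) * mconst (avar i j)"
      unfolding mpderiv_power mpderiv_mvar dL[OF that] using d by (metis of_nat_Suc)
    finally show ?thesis by (simp add: u_def)
  qed
  have J: "Jac n d = det (mat n n (\<lambda>(i,j). (if i = j then 1 else 0) + u i * mconst (avar i j)))"
    unfolding Jac_def by (rule arg_cong[where f=det], rule eq_matI) (auto simp: entry)
  also have "\<dots> = (\<Sum>S\<in>Pow {0..<n}. (\<Prod>i\<in>S. u i) * (\<Sum>p\<in>{p. p permutes S}. of_int (sign p) * (\<Prod>i\<in>S. mconst (avar i (p i)))))"
    by (rule det_I_plus)
  also have "\<dots> = (\<Sum>S\<in>Pow {0..<n}. (\<Prod>i\<in>S. u i) * mconst (principal_minor S))"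
  proof (rule sum.cong[OF refl])
    fix S assume "S \<in> Pow {0..<n}"
    then have "finite S" using finite_subset by blast
    then show "(\<Prod>i\<in>S. u i) * (\<Sum>p\<in>{p. p permutes S}. of_int (sign p) * (\<Prod>i\<in>S. mconst (avar i (p i)))) =
       (\<Prod>i\<in>S. u i) * mconst (principal_minor S)"
      by (simp add: principal_minor_eq mconst_hom.hom_sum mconst_hom.hom_mult mconst_hom.hom_prod mconst_hom.hom_of_int)
  qed
  finally have J1: "Jac n d = \<dots>" .
  define c where "c S = (- of_nat d) ^ card S * (\<Prod>i\<in>S. avar i l ^ (d - 1))" for S
  have rL: "rho l (L i) = mconst (avar i l) * mvar l" for i
  proof -
    have "rho l (L i) = (\<Sum>j<n. if j = l then mconst (avar i j) * mvar l else 0)"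
      unfolding L_def rho_hom.hom_sum rho_hom.hom_mult rho_mconst rho_mvar
      by (rule sum.cong) auto
    then show ?thesis using assms(5) by (simp add: sum.delta)
  qed
  have ru: "rho l (u i) = mconst (- of_nat d * avar i l ^ (d - 1)) * mvar l ^ (d - 1)" for i
    unfolding u_def rho_hom.hom_mult rho_hom.hom_uminus rho_hom.hom_of_nat rho_hom.hom_power rL
    by (simp add: mconst_hom.hom_mult mconst_hom.hom_uminus mconst_hom.hom_of_nat mconst_hom.hom_power power_mult_distrib)
  have rprod: "rho l (\<Prod>i\<in>S. u i) = mconst (c S) * mvar l ^ (card S * (d - 1))" if "finite S" for S
  proof -
    have "rho l (\<Prod>i\<in>S. u i) = (\<Prod>i\<in>S. mconst (- of_nat d * avar i l ^ (d - 1)) * mvar l ^ (d - 1))"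
      by (simp add: rho_hom.hom_prod ru)
    also have "\<dots> = mconst (\<Prod>i\<in>S. - of_nat d * avar i l ^ (d - 1)) * mvar l ^ (card S * (d - 1))"
      by (simp add: prod.distrib mconst_hom.hom_prod mult.commute flip: power_mult)
    also have "(\<Prod>i\<in>S. - of_nat d * avar i l ^ (d - 1)) = c S"
      by (simp only: c_def prod.distrib prod_constant)
    finally show ?thesis .
  qed
  have "Poly_Mapping.lookup (Jac n d) (Poly_Mapping.single l (k * (d - 1))) =
      Poly_Mapping.lookup (rho l (Jac n d)) (Poly_Mapping.single l (k * (d - 1)))"
    by (rule lookup_rho_same)
  also have "rho l (Jac n d) = (\<Sum>S\<in>Pow {0..<n}. mconst (c S * principal_minor S) * mvar l ^ (card S * (d - 1)))"
    unfolding J1 rho_hom.hom_sum rho_hom.hom_mult rho_mconst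
  proof (rule sum.cong[OF refl])
    fix S assume "S \<in> Pow {0..<n}"
    then have "finite S" using finite_subset by blast
    then show "rho l (\<Prod>i\<in>S. u i) * mconst (principal_minor S) =
        mconst (c S * principal_minor S) * mvar l ^ (card S * (d - 1))"
      by (simp add: rprod mconst_hom.hom_mult algebra_simps)
  qed
  also have "Poly_Mapping.lookup \<dots> (Poly_Mapping.single l (k * (d - 1))) =
      (\<Sum>S\<in>Pow {0..<n}. if card S = k then c S * principal_minor S else 0)"
    unfolding lookup_sum lookup_mconst_mvar_power
    by (rule sum.cong[OF refl]) (use assms(1) in auto)
  also have "\<dots> = (\<Sum>S\<in>{S\<in>Pow {0..<n}. card S = k}. c S * principal_minor S)"
    by (rule sum.inter_filter[symmetric]) simp
  also have "{S\<in>Pow {0..<n}. card S = k} = {S. S \<subseteq> {0..<n} \<and> card S = k}" by auto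
  also have "(\<Sum>S\<in>{S. S \<subseteq> {0..<n} \<and> card S = k}. c S * principal_minor S) =
      (\<Sum>S\<in>{S. S \<subseteq> {0..<n} \<and> card S = k}. (- of_nat d) ^ k * (principal_minor S * (\<Prod>r\<in>S. avar r l ^ (d - 1))))"
    by (rule sum.cong[OF refl]) (simp add: c_def)
  finally show ?thesis by (simp add: sum_distrib_left)
qed

end
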